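(* Let $a,b,d>0$, let $c_-$ be the unique negative zero of $Q(x)=4ax^3-b^2x^2-18abd\,x+27a^2d^2+4db^3$, let $c^*=-\sqrt{3bd}$, and assume $c\in(c_-,c^* )$. Let $\phi(x)=\frac{ax^3+bx^2+cx+d}{x^3}$ ($x>0$), $x_m=\frac{-c-\sqrt{c^2-3bd}}{b}$, $x_M=\frac{-c+\sqrt{c^2-3bd}}{b}$. Assume $\phi$ has a unique equilibrium $\overline{t}$ with $\overline{t}<x_m$, and let $\{t_n\}_{n\ge0}$ be a positive solution of $t_{n+1}=\phi(t_n)$. Let $c_1^*=-2\sqrt{bd}$; when $c>c_1^*$ let $\eta=\frac{-dx_m}{cx_m+2d}$ (the unique $\eta>x_M$ with $\phi(\eta)=\phi(x_m)$). Let $I=[\phi(x_m),\phi^2(x_m)]$. \begin{description} \item[(a)] Under the hypothesis (H): "either $c\leq c_1^*$, or $c>c_1^*$ and $\phi^2(x_m)\leq\eta$", the interval $I$ is invariant, i.e. $\phi(I)\subseteq I$. Moreover, if $c\leq c_1^*$ then every positive solution eventually enters $I$ (and stays there). \item[(b)] If $\phi$ has no 2-cycle, then $\{t_n\}$ converges to $\overline{t}$. \item[(c)] Assume $\phi$ has exactly one 2-cycle $(p,q)$ with $p<\overline{t}<q\leq x_m$. Let $\mathcal{S}=\bigcup_{n\ge0}\phi^{-n}(\overline{t})=\{t>0:\phi^n(t)=\overline{t}\text{ for some }n\ge0\}$. If $\overline{t}<-dx_M/(cx_M+2d)$ then $\mathcal{S}=\{\overline{t}\}$. Also, if $t_0\notin\mathcal{S}$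 then $\{t_n\}$ converges to the 2-cycle $(p,q)$; otherwise it converges to $\overline{t}$. \end{description}
   Context: $x_m<x_M$ are the local minimum and local maximum points of $\phi$; $\phi^n$ denotes the $n$-th iterate. An equilibrium is $t>0$ with $\phi(t)=t$. A 2-cycle is a pair $(p,q)$ of positive numbers with $p\ne q$, $\phi(p)=q$, $\phi(q)=p$. A positive solution is a sequence with $t_0>0$ and $t_{n+1}=\phi(t_n)$. The sequence $\{t_n\}$ converges to the 2-cycle $(p,q)$ if one of the subsequences $\{t_{2n}\}$, $\{t_{2n+1}\}$ converges to $p$ and the other to $q$. *)

theory Defs
  imports Complex_Main
begin

definition phi :: "real \<Rightarrow> real \<Rightarrow> real \<Rightarrow> real \<Rightarrow> real \<Rightarrow> real" where
  "phi a b c d x = (a * x ^ 3 + b * x ^ 2 + c * x + d) / x ^ 3"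

definition Qpoly :: "real \<Rightarrow> real \<Rightarrow> real \<Rightarrow> real \<Rightarrow> real" where
  "Qpoly a b d x = 4 * a * x ^ 3 - b ^ 2 * x ^ 2 - 18 * a * b * d * x + 27 * a ^ 2 * d ^ 2 + 4 * d * b ^ 3"

definition cminus :: "real \<Rightarrow> real \<Rightarrow> real \<Rightarrow> real" where
  "cminus a b d = (THE x. x < 0 \<and> Qpoly a b d x = 0)"

definition xm :: "real \<Rightarrow> real \<Rightarrow> real \<Rightarrow> real" where
  "xm b c d = (- c - sqrt (c ^ 2 - 3 * b * d)) / b"

definition xM :: "real \<Rightarrow> real \<Rightarrow> real \<Rightarrow> real" where
  "xM b c d = (- c + sqrt (c ^ 2 - 3 * b * d)) / b"

definition two_cycle :: "(real \<Rightarrow> real) \<Rightarrow> real \<Rightarrow> real \<Rightarrow> bool" where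
  "two_cycle f p q \<longleftrightarrow> p > 0 \<and> q > 0 \<and> p \<noteq> q \<and> f p = q \<and> f q = p"

definition conv_two_cycle :: "(nat \<Rightarrow> real) \<Rightarrow> real \<Rightarrow> real \<Rightarrow> bool" where
  "conv_two_cycle t p q \<longleftrightarrow>
     ((\<lambda>n. t (2 * n)) \<longlonglongrightarrow> p \<and> (\<lambda>n. t (2 * n + 1)) \<longlonglongrightarrow> q) \<or>
     ((\<lambda>n. t (2 * n)) \<longlonglongrightarrow> q \<and> (\<lambda>n. t (2 * n + 1)) \<longlonglongrightarrow> p)"

end

theory Submission
  imports Defs "HOL-Library.Infinite_Set"
begin


lemma phi_alt: "x \<noteq> 0 \<Longrightarrow> phi a b c d x = a + b/x + c/x^2 + d/x^3"
  unfolding phi_def by (simp add: field_simps power2_eq_square power3_eq_cube)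

lemma phi_deriv: "x \<noteq> 0 \<Longrightarrow> DERIV (phi a b c d) x :> - (b*x^2 + 2*c*x + 3*d) / x^4"
proof -
  assume x: "x \<noteq> 0"
  have e: "\<forall>\<^sub>F y in nhds x. a + b/y + c/y^2 + d/y^3 = phi a b c d y"
    using t1_space_nhds[OF x]
    by (auto elim!: eventually_mono simp: phi_alt)
  have "DERIV (\<lambda>y. a + b/y + c/y^2 + d/y^3) x :> - (b*x^2 + 2*c*x + 3*d) / x^4"
    using x
    by (auto intro!: derivative_eq_intros simp: field_simps power2_eq_square power3_eq_cube power4_eq_xxxx)
  then show ?thesis
    using DERIV_cong_ev[OF refl e refl] by simp
qed

lemma phi_isCont: "x \<noteq> 0 \<Longrightarrow> isCont (phi a b c d) x"
  using phi_deriv DERIV_isCont by blast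



lemma Qpoly_neg_root_unique:
  assumes a: "a > 0" and b: "b > 0" and d: "d > 0"
    and u: "u < 0" "Qpoly a b d u = 0" and v: "v < 0" "Qpoly a b d v = 0"
  shows "u = v"
proof (rule ccontr)
  assume uv: "u \<noteq> v"
  define w where "w = b^2/(4*a) - u - v"
  define r1 where "r1 = -18*a*b*d - 4*a*(u*v+u*w+v*w)"
  define r0 where "r0 = 27*a^2*d^2+4*d*b^3 + 4*a*u*v*w"
  have id: "Qpoly a b d x = 4*a*(x-u)*(x-v)*(x-w) + r1*x + r0" for x
    unfolding Qpoly_def r1_def r0_def w_def using a
    by (simp add: field_simps power2_eq_square power3_eq_cube)
  have "r1*u + r0 = 0" using id[of u] u by simp
  moreover have "r1*v + r0 = 0" using id[of v] v by simp
  ultimately have "r1 * (u - v) = 0" by (metis add_right_cancel diff_self right_diff_distrib)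
  hence "r1 = 0" using uv by simp
  hence "r0 = 0" using \<open>r1*u + r0 = 0\<close> by simp
  moreover have "w > 0" proof -
    have "b^2/(4*a) \<ge> 0" using a by simp
    thus ?thesis unfolding w_def using u v by linarith
  qed
  moreover have "u*v > 0" using u v by (simp add: mult_neg_neg)
  ultimately have "27*a^2*d^2+4*d*b^3 + 4*a*(u*v)*w > 0" using a b d
    by (intro add_pos_pos) (auto intro!: mult_pos_pos)
  thus False using \<open>r0 = 0\<close> unfolding r0_def by (simp add: algebra_simps)
qed

lemma cminus_char:
  assumes a: "a > 0" and b: "b > 0" and d: "d > 0"
  shows "\<exists>x0>0. 2*a*x0^3 + b*x0^2 = d \<and> cminus a b d = -(3*a*x0^2 + 2*b*x0)"
proof -
  define K where "K = 1 + d/b"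
  have K1: "K \<ge> 1" using b d unfolding K_def by simp
  have "b*K^2 \<ge> b*K" using K1 b by (simp add: power2_eq_square)
  moreover have "b*K = b + d" using b unfolding K_def by (simp add: field_simps)
  moreover have "2*a*K^3 \<ge> 0" using a K1 by simp
  ultimately have FK: "2*a*K^3 + b*K^2 - d \<ge> 0" using b by linarith
  have "\<exists>x. 0 \<le> x \<and> x \<le> K \<and> 2*a*x^3 + b*x^2 - d = 0"
    by (rule IVT[where f="\<lambda>x. 2*a*x^3 + b*x^2 - d"]) (use d FK K1 in \<open>auto intro!: continuous_intros\<close>)
  then obtain x0 where x0: "0 \<le> x0" "2*a*x0^3 + b*x0^2 - d = 0" by blast
  have "x0 \<noteq> 0" using x0 d by auto
  hence x0p: "x0 > 0" using x0 by simp
  define c0 where "c0 = -(3*a*x0^2 + 2*b*x0)"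
  have c0n: "c0 < 0" unfolding c0_def using a b x0p by (simp add: add_pos_pos) (smt (verit) mult_pos_pos zero_less_power)
  have dd: "d = 2*a*x0^3 + b*x0^2" using x0 by simp
  have Q0: "Qpoly a b d c0 = 0"
    unfolding Qpoly_def c0_def dd by (simp add: algebra_simps power2_eq_square power3_eq_cube)
  have "cminus a b d = c0"
    unfolding cminus_def
  proof (rule the_equality)
    show "c0 < 0 \<and> Qpoly a b d c0 = 0" using c0n Q0 by simp
    fix y assume "y < 0 \<and> Qpoly a b d y = 0"
    thus "y = c0" using Qpoly_neg_root_unique[OF a b d _ _ c0n Q0] by blast
  qed
  thus ?thesis using x0p dd c0_def by auto
qed

lemma numer_pos:
  assumes a: "a > 0" and b: "b > 0" and d: "d > 0" and c: "cminus a b d < c" and x: "x > 0"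
  shows "a*x^3 + b*x^2 + c*x + d > 0"
proof -
  obtain x0 where x0: "x0 > 0" "2*a*x0^3 + b*x0^2 = d" "cminus a b d = -(3*a*x0^2 + 2*b*x0)"
    using cminus_char[OF a b d] by blast
  have "a*x^3 + b*x^2 + (-(3*a*x0^2 + 2*b*x0))*x + d = (x-x0)^2*(a*x + 2*a*x0 + b)"
    by (simp add: x0(2)[symmetric] algebra_simps power2_eq_square power3_eq_cube)
  also have "\<dots> \<ge> 0" using a b x x0 by (intro mult_nonneg_nonneg) auto
  finally have "a*x^3 + b*x^2 + cminus a b d * x + d \<ge> 0" using x0(3) by simp
  moreover have "cminus a b d * x < c * x" using c x by simp
  ultimately show ?thesis by linarith
qed



locale setting =
  fixes a b c d tbar :: real
  assumes a: "a > 0" and b: "b > 0" and d: "d > 0"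
    and cm: "cminus a b d < c" and cs: "c < - sqrt (3*b*d)"
    and tpos: "tbar > 0" and tfix: "phi a b c d tbar = tbar"
    and tuniq: "\<forall>s>0. phi a b c d s = s \<longrightarrow> s = tbar" and tlt: "tbar < xm b c d"
begin

abbreviation f where "f \<equiv> phi a b c d"
abbreviation m where "m \<equiv> xm b c d"
abbreviation M where "M \<equiv> xM b c d"

lemma c_neg: "c < 0"
proof -
  have "sqrt (3*b*d) \<ge> 0" using b d by simp
  thus ?thesis using cs by linarith
qed

lemma c_sq: "c^2 > 3*b*d"
proof -
  have "sqrt (3*b*d) < -c" using cs by simp
  hence "(sqrt (3*b*d))^2 < (-c)^2" using b d by (intro power_strict_mono) auto
  thus ?thesis using b d by simp
qed

definition sr where "sr = sqrt (c^2 - 3*b*d)"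
lemma s_pos: "sr > 0" unfolding sr_def using c_sq by simp
lemma s_sq: "sr^2 = c^2 - 3*b*d" unfolding sr_def using c_sq by (intro real_sqrt_pow2) simp
lemma s_lt: "sr < -c"
proof -
  have "3*b*d > 0" using b d by simp
  hence "sr^2 < (-c)^2" unfolding s_sq by simp
  from power_less_imp_less_base[OF this] show ?thesis using c_neg by simp
qed

lemma m_def': "m = (-c - sr)/b" unfolding xm_def sr_def by simp
lemma M_def': "M = (-c + sr)/b" unfolding xM_def sr_def by simp
lemma m_pos: "m > 0" unfolding m_def' using s_lt b by simp
lemma m_lt_M: "m < M" unfolding m_def' M_def' using s_pos b by (simp add: divide_strict_right_mono)
lemma M_pos: "M > 0" using m_pos m_lt_M by simp

lemma Q2_fact: "b*x^2 + 2*c*x + 3*d = b*(x-m)*(x-M)"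
proof -
  have "b*(x-m)*(x-M) = b*x^2 - b*(m+M)*x + b*(m*M)" by (simp add: algebra_simps power2_eq_square)
  also have "b*(m+M) = -2*c" unfolding m_def' M_def' using b by (simp add: field_simps)
  also have "b*(m*M) = 3*d"
  proof -
    have e: "(-c-sr)*(-c+sr) = 3*b*d" using s_sq by (simp add: algebra_simps power2_eq_square)
    have "b*(m*M) = ((-c-sr)*(-c+sr))/b" unfolding m_def' M_def' using b by (simp add: field_simps power2_eq_square)
    thus ?thesis unfolding e using b by simp
  qed
  finally show ?thesis by simp
qed

lemma f_pos: "x > 0 \<Longrightarrow> f x > 0"
  unfolding phi_def using numer_pos[OF a b d cm] by simp

lemma f_cont: "x > 0 \<Longrightarrow> isCont f x" using phi_isCont by simp
lemma f_cont_on: "0 < l \<Longrightarrow> continuous_on {l..r} f"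
  by (intro continuous_at_imp_continuous_on) (auto intro: f_cont)

lemma f_deriv: "x > 0 \<Longrightarrow> DERIV f x :> - (b*(x-m)*(x-M)) / x^4"
  using phi_deriv[of x a b c d] Q2_fact by simp

lemma f_dec1: assumes "0 < x" "x < y" "y \<le> m" shows "f y < f x"
proof (rule DERIV_neg_imp_decreasing_open[OF assms(2)])
  fix z assume z: "x < z" "z < y"
  have "(z-m)*(z-M) > 0" using z assms m_lt_M by (intro mult_neg_neg) auto
  hence "- (b*(z-m)*(z-M)) / z^4 < 0" using b z assms by (simp add: mult.assoc)
  thus "\<exists>l. DERIV f z :> l \<and> l < 0" using f_deriv[of z] z assms by auto
qed (use f_cont_on assms in auto)

lemma f_dec1': assumes "0 < x" "x \<le> y" "y \<le> m" shows "f y \<le> f x"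
  using f_dec1[OF assms(1) _ assms(3)] assms(2) by (cases "x = y") auto

lemma f_inc: assumes "m \<le> x" "x < y" "y \<le> M" shows "f x < f y"
proof (rule DERIV_pos_imp_increasing_open[OF assms(2)])
  fix z assume z: "x < z" "z < y"
  have "(z-m)*(z-M) < 0" using z assms m_lt_M by (intro mult_pos_neg) auto
  hence "b*((z-m)*(z-M)) < 0" using b by (rule mult_pos_neg[rotated])
  moreover have "z^4 > 0" using z assms m_pos by simp
  ultimately have "- (b*(z-m)*(z-M)) / z^4 > 0" by (simp add: mult.assoc divide_neg_pos)
  thus "\<exists>l. DERIV f z :> l \<and> l > 0" using f_deriv[of z] z assms m_pos by auto
qed (use f_cont_on assms m_pos in auto)

lemma f_inc': assumes "m \<le> x" "x \<le> y" "y \<le> M" shows "f x \<le> f y"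
  using f_inc[OF assms(1) _ assms(3)] assms(2) by (cases "x = y") auto

lemma f_dec2: assumes "M \<le> x" "x < y" shows "f y < f x"
proof (rule DERIV_neg_imp_decreasing_open[OF assms(2)])
  fix z assume z: "x < z" "z < y"
  have "(z-m)*(z-M) > 0" using z assms m_lt_M by (intro mult_pos_pos) auto
  hence "- (b*(z-m)*(z-M)) / z^4 < 0" using b z assms M_pos by (simp add: mult.assoc)
  thus "\<exists>l. DERIV f z :> l \<and> l < 0" using f_deriv[of z] z assms M_pos by auto
qed (use f_cont_on assms M_pos in auto)

lemma f_dec2': assumes "M \<le> x" "x \<le> y" shows "f y \<le> f x"
  by (metis f_dec2 assms order_le_less)

end


lemma sign_const:
  fixes F :: "real \<Rightarrow> real"
  assumes cont: "\<And>x. l < x \<Longrightarrow> x < r \<Longrightarrow> isCont F x"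
    and nz: "\<And>x. l < x \<Longrightarrow> x < r \<Longrightarrow> F x \<noteq> 0"
    and x0: "l < x0" "x0 < r" "F x0 < 0" and x: "l < x" "x < r"
  shows "F x < 0"
proof (rule ccontr)
  assume "\<not> F x < 0"
  hence Fx: "F x \<ge> 0" by simp
  show False
  proof (cases "x0 \<le> x")
    case True
    obtain z where "x0 \<le> z" "z \<le> x" "F z = 0"
      using IVT[of F x0 0 x] True Fx x0 x cont by fastforce
    thus False using nz[of z] x0 x by auto
  next
    case False
    obtain z where "x \<le> z" "z \<le> x0" "F z = 0"
      using IVT2[of F x0 0 x] False Fx x0 x cont by fastforce
    thus False using nz[of z] x0 x by auto
  qed
qed

lemma LIMSEQ_even_odd:
  fixes t :: "nat \<Rightarrow> real"
  assumes e: "(\<lambda>n. t (2*n)) \<longlonglongrightarrow> L" and o: "(\<lambda>n. t (2*n+1)) \<longlonglongrightarrow> L"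
  shows "t \<longlonglongrightarrow> L"
proof (rule LIMSEQ_I)
  fix r :: real assume r: "r > 0"
  obtain N1 where N1: "\<forall>n\<ge>N1. norm (t (2*n) - L) < r" using LIMSEQ_D[OF e r] by blast
  obtain N2 where N2: "\<forall>n\<ge>N2. norm (t (2*n+1) - L) < r" using LIMSEQ_D[OF o r] by blast
  show "\<exists>N. \<forall>n\<ge>N. norm (t n - L) < r"
  proof (intro exI allI impI)
    fix n assume n: "n \<ge> 2*N1 + 2*N2"
    show "norm (t n - L) < r"
    proof (cases "even n")
      case True then obtain k where "n = 2*k" by blast
      thus ?thesis using N1 n by auto
    next
      case False then obtain k where "n = 2*k+1" using oddE by blast
      thus ?thesis using N2 n by auto
    qed
  qed
qed

context setting begin

lemma alpha_pos: "f m > 0" using f_pos m_pos by simp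
lemma alpha_lt: "f m < tbar" using f_dec1[OF tpos tlt] tfix by simp
lemma f_gt_tbar: "0 < x \<Longrightarrow> x < tbar \<Longrightarrow> f x > tbar"
  using f_dec1[of x tbar] tlt tfix by simp
lemma f_lt_tbar: "tbar < x \<Longrightarrow> x \<le> m \<Longrightarrow> f x < tbar"
  using f_dec1[of tbar x] tpos tfix by simp
lemma beta_gt: "f (f m) > tbar" using f_gt_tbar alpha_pos alpha_lt by simp
lemma f_gt_x: "0 < x \<Longrightarrow> x < tbar \<Longrightarrow> f x > x" using f_gt_tbar by force

lemma f_le_bound: assumes "z > 0" shows "f z \<le> a + b/z + d/z^3"
proof -
  have "c/z^2 \<le> 0" using c_neg assms by (simp add: divide_nonpos_pos)
  thus ?thesis using assms by (simp add: phi_alt)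
qed

lemma f_gt_a: assumes "y > 0" "b*y + c \<ge> 0" shows "f y > a"
proof -
  have "y*(b*y + c) \<ge> 0" using assms by simp
  moreover have "b*y^2 + c*y = y*(b*y+c)" by (simp add: algebra_simps power2_eq_square)
  ultimately have "b*y^2 + c*y + d > 0" using d by linarith
  hence "(b*y^2 + c*y + d)/y^3 > 0" using assms by simp
  moreover have "f y = a + (b*y^2 + c*y + d)/y^3" using assms
    unfolding phi_def by (simp add: field_simps)
  ultimately show ?thesis by simp
qed

definition Ybig where "Ybig = max 1 (max (-c/b) (a + b/a + d/a^3 + a + b + d + 1))"

lemma big_props: assumes "y \<ge> Ybig" shows "f y < y" "f (f y) < y"
proof -
  have y1: "y \<ge> 1" using assms unfolding Ybig_def by simp
  have y2: "y \<ge> -c/b" using assms unfolding Ybig_def by simp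
  have y3: "y \<ge> a + b/a + d/a^3 + a + b + d + 1" using assms unfolding Ybig_def by simp
  have pa: "b/a \<ge> 0" "d/a^3 \<ge> 0" using a b d by auto
  have "f y \<le> a + b/y + d/y^3" using f_le_bound y1 by simp
  moreover have "b/y \<le> b" using y1 b by (simp add: divide_le_eq)
  moreover have "d/y^3 \<le> d" using y1 d by (simp add: divide_le_eq one_le_power)
  ultimately show "f y < y" using y3 pa a by linarith
  have "(-c)/b \<le> y" using y2 by simp
  hence "-c \<le> y*b" using b by (metis pos_divide_le_eq)
  hence "b*y + c \<ge> 0" by (simp add: mult.commute)
  hence fa: "f y > a" using f_gt_a y1 by simp
  have "f (f y) \<le> a + b/(f y) + d/(f y)^3" using f_le_bound fa a by simp
  moreover have "b/(f y) \<le> b/a" using fa a b by (simp add: frac_le)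
  moreover have "d/(f y)^3 \<le> d/a^3" using fa a d by (intro divide_left_mono power_mono) auto
  moreover have "a + b + d + 1 > 0" using a b d by simp
  ultimately show "f (f y) < y" using y3 by linarith
qed

lemma f_lt_x: assumes "x > tbar" shows "f x < x"
proof -
  define R where "R = max x Ybig + 1"
  have c1: "isCont (\<lambda>z. f z - z) z" if "tbar < z" "z < R" for z
    using that tpos f_cont by (auto intro!: continuous_intros)
  have c2: "(\<lambda>z. f z - z) z \<noteq> 0" if "tbar < z" "z < R" for z
  proof
    assume "(\<lambda>z. f z - z) z = 0"
    hence "f z = z" by simp
    moreover have "z > 0" using that tpos by simp
    ultimately have "z = tbar" using tuniq by blast
    thus False using that by simp
  qed
  have c3: "tbar < Ybig"
  proof (rule ccontr)
    assume "\<not> tbar < Ybig"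
    thus False using big_props(1)[of tbar] tfix by simp
  qed
  have c4: "(\<lambda>z. f z - z) Ybig < 0" using big_props(1)[of Ybig] by simp
  have "(\<lambda>z. f z - z) x < 0"
    by (rule sign_const[of tbar R "\<lambda>z. f z - z" Ybig x, OF c1 c2 c3 _ c4 assms]) (auto simp: R_def)
  thus ?thesis by simp
qed

lemma alpha_lower: "0 < x \<Longrightarrow> x \<le> M \<Longrightarrow> f m \<le> f x"
  using f_dec1'[of x m] f_inc'[of m x] m_pos by (cases "x \<le> m") auto

lemma invariance:
  assumes H: "\<forall>x. m \<le> x \<and> x \<le> f (f m) \<longrightarrow> f x \<ge> f m"
  shows "f ` {f m .. f (f m)} \<subseteq> {f m .. f (f m)}"
proof
  fix y assume "y \<in> f ` {f m .. f (f m)}"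
  then obtain x where x: "f m \<le> x" "x \<le> f (f m)" "y = f x" by auto
  have xp: "x > 0" using x alpha_pos by simp
  show "y \<in> {f m .. f (f m)}"
  proof (cases "x \<le> tbar")
    case True
    have "f x \<le> f (f m)" using f_dec1'[of "f m" x] alpha_pos x True tlt by simp
    moreover have "f x \<ge> tbar" using f_dec1'[of x tbar] xp True tlt tfix by simp
    ultimately show ?thesis using x alpha_lt by simp
  next
    case False
    hence "f x < x" using f_lt_x by simp
    moreover have "f x \<ge> f m"
    proof (cases "x \<le> m")
      case True thus ?thesis using f_dec1' xp by simp
    next
      case False thus ?thesis using H x by simp
    qed
    ultimately show ?thesis using x by simp
  qed
qed

lemma crit_identity:
  assumes z: "z \<noteq> 0" "b*z^2 + 2*c*z + 3*d = 0" and x: "x \<noteq> 0"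
  shows "f x - f z = d * (1/x - 1/z)^2 * (1/x - (-c/d - 2/z))"
proof -
  have bz: "b = -(2*c*z + 3*d)/z^2" using z by (simp add: field_simps)
  show ?thesis unfolding phi_def bz using z x d
    by (simp add: field_simps power2_eq_square power3_eq_cube)
qed

lemma m_crit: "b*m^2 + 2*c*m + 3*d = 0" using Q2_fact[of m] by simp
lemma M_crit: "b*M^2 + 2*c*M + 3*d = 0" using Q2_fact[of M] by simp

end


context setting begin

lemma cm_expr: "c*m + 2*d = ((-c)*sr - (c^2 - 2*b*d))/b"
  unfolding m_def' using b by (simp add: field_simps power2_eq_square)

lemma sq_diff: "((-c)*sr)^2 - (c^2 - 2*b*d)^2 = b*d*(c^2 - 4*b*d)"
proof -
  have "((-c)*sr)^2 = c^2 * sr^2" by (simp add: power_mult_distrib)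
  also have "\<dots> = c^2 * (c^2 - 3*b*d)" using s_sq by simp
  finally show ?thesis by (simp add: algebra_simps power2_eq_square)
qed

lemma c2bd: "c^2 - 2*b*d > 0"
proof -
  have "b*d > 0" using b d by simp
  thus ?thesis using c_sq by simp
qed
lemma cs_pos: "(-c)*sr \<ge> 0"
proof -
  have "c*sr \<le> 0" using c_neg s_pos by (intro mult_nonpos_nonneg) auto
  thus ?thesis by simp
qed

lemma c_le_c1_imp: assumes "c \<le> - 2 * sqrt (b*d)" shows "c*m + 2*d \<ge> 0"
proof -
  have h: "0 \<le> 2 * sqrt (b*d)" using b d by simp
  have "2 * sqrt (b*d) \<le> -c" using assms by simp
  hence "(2 * sqrt (b*d))^2 \<le> (-c)^2" using power_mono[OF _ h, of "-c" 2] by simp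
  hence "4*b*d \<le> c^2" using b d by (simp add: power_mult_distrib)
  hence "b*d*(c^2 - 4*b*d) \<ge> 0" using b d by simp
  hence "(c^2 - 2*b*d)^2 \<le> ((-c)*sr)^2" using sq_diff by linarith
  hence "c^2 - 2*b*d \<le> (-c)*sr" using cs_pos by (rule power2_le_imp_le)
  thus ?thesis unfolding cm_expr using b by simp
qed

lemma c_gt_c1_imp: assumes "c > - 2 * sqrt (b*d)" shows "c*m + 2*d < 0"
proof -
  have h: "0 \<le> -c" using c_neg by simp
  have "-c < 2 * sqrt (b*d)" using assms by simp
  hence "(-c)^2 < (2 * sqrt (b*d))^2" using power_strict_mono[OF _ h, of "2 * sqrt (b*d)" 2] by simp
  hence "c^2 < 4*b*d" using b d by (simp add: power_mult_distrib)
  hence "b*d*(c^2 - 4*b*d) < 0" using b d by (simp add: mult_pos_neg)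
  hence "((-c)*sr)^2 < (c^2 - 2*b*d)^2" using sq_diff by linarith
  hence "(-c)*sr < c^2 - 2*b*d" using power_less_imp_less_base c2bd by fastforce
  thus ?thesis unfolding cm_expr using b by (simp add: divide_neg_pos)
qed

lemma ge_alpha_crit:
  assumes x: "x > 0" and v: "1/x \<ge> -c/d - 2/m"
  shows "f x \<ge> f m"
proof -
  have "f x - f m = d * (1/x - 1/m)^2 * (1/x - (-c/d - 2/m))"
    using crit_identity[OF _ m_crit] m_pos x by simp
  also have "\<dots> \<ge> 0" using d v by simp
  finally show ?thesis by simp
qed

lemma partA_H1: assumes "c \<le> - 2 * sqrt (b*d)" "x > 0" shows "f x \<ge> f m"
proof (rule ge_alpha_crit[OF assms(2)])
  have "c*m + 2*d \<ge> 0" using c_le_c1_imp assms by simp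
  hence "-c/d - 2/m = -(c*m + 2*d)/(d*m)" using d m_pos by (simp add: field_simps)
  also have "\<dots> \<le> 0" using \<open>c*m + 2*d \<ge> 0\<close> d m_pos by (simp add: divide_nonpos_pos)
  also have "0 \<le> 1/x" using assms by simp
  finally show "-c/d - 2/m \<le> 1/x" .
qed

lemma partA_H2: assumes "c > - 2 * sqrt (b*d)" "m \<le> x" "x \<le> - d * m / (c * m + 2 * d)"
  shows "f x \<ge> f m"
proof -
  have x: "x > 0" using assms m_pos by simp
  have neg: "c*m + 2*d < 0" using c_gt_c1_imp assms by simp
  have v: "-c/d - 2/m = -(c*m + 2*d)/(d*m)" using d m_pos by (simp add: field_simps)
  have vpos: "-(c*m + 2*d)/(d*m) > 0" using neg d m_pos by (simp add: divide_pos_pos)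
  have eta: "- d * m / (c * m + 2 * d) = 1 / (-(c*m + 2*d)/(d*m))"
    using neg d m_pos by (simp add: field_simps)
  have "x \<le> 1 / (-(c*m + 2*d)/(d*m))" using assms(3) eta by simp
  hence "-(c*m + 2*d)/(d*m) \<le> 1/x" using vpos x
    by (metis le_imp_inverse_le inverse_eq_divide inverse_inverse_eq)
  thus ?thesis using ge_alpha_crit[OF x] v by simp
qed

lemma fM_lt_tbar: assumes "tbar < - d * M / (c * M + 2 * d)" shows "f M < tbar"
proof -
  have neg: "c*M + 2*d < 0"
  proof (rule ccontr)
    assume "\<not> c*M + 2*d < 0"
    hence "- d * M / (c * M + 2 * d) \<le> 0" using d M_pos
      by (simp add: divide_nonpos_nonneg)
    thus False using assms tpos by simp
  qed
  have v: "-c/d - 2/M = -(c*M + 2*d)/(d*M)" using d M_pos by (simp add: field_simps)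
  have vpos: "-(c*M + 2*d)/(d*M) > 0" using neg d M_pos by (simp add: divide_pos_pos)
  have eta: "- d * M / (c * M + 2 * d) = 1 / (-(c*M + 2*d)/(d*M))"
    using neg d M_pos by (simp add: field_simps)
  have "tbar < 1 / (-(c*M + 2*d)/(d*M))" using assms eta by simp
  hence "inverse (1 / (-(c*M + 2*d)/(d*M))) < inverse tbar" by (rule less_imp_inverse_less[OF _ tpos])
  hence lt: "-(c*M + 2*d)/(d*M) < 1/tbar" by (simp add: inverse_eq_divide)
  have "f tbar - f M = d * (1/tbar - 1/M)^2 * (1/tbar - (-c/d - 2/M))"
    using crit_identity[OF _ M_crit] M_pos tpos by simp
  moreover have "1/tbar - 1/M \<noteq> 0" using tpos tlt m_lt_M by simp
  ultimately have "f tbar - f M > 0" using d lt v by simp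
  thus ?thesis using tfix by simp
qed

lemma preimage_tbar:
  assumes fM: "f M < tbar" and s: "y > 0" "f y = tbar" shows "y = tbar"
proof -
  consider "y \<le> m" | "m \<le> y" "y \<le> M" | "M \<le> y" by linarith
  thus ?thesis
  proof cases
    case 1
    show ?thesis
    proof (rule ccontr)
      assume "y \<noteq> tbar"
      hence "y < tbar \<or> tbar < y" by auto
      thus False using f_dec1[of y tbar] f_dec1[of tbar y] 1 s tpos tlt tfix by auto
    qed
  next
    case 2 thus ?thesis using f_inc'[of y M] fM s by simp
  next
    case 3 thus ?thesis using f_dec2'[of M y] fM s by simp
  qed
qed

lemma S_singleton:
  assumes fM: "f M < tbar"
  shows "{s. s > 0 \<and> (\<exists>n. (f ^^ n) s = tbar)} = {tbar}"
proof -
  have "y = tbar" if "y > 0" "(f ^^ n) y = tbar" for n y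
    using that
  proof (induction n arbitrary: y)
    case 0 thus ?case by simp
  next
    case (Suc n)
    have "(f ^^ n) (f y) = tbar" using Suc.prems by (simp add: funpow_Suc_right del: funpow.simps)
    hence "f y = tbar" using Suc.IH f_pos Suc.prems by blast
    thus ?case using preimage_tbar fM Suc.prems by blast
  qed
  moreover have "(f ^^ 0) tbar = tbar" by simp
  ultimately show ?thesis using tpos by blast
qed

end


context setting begin

lemma orbit_pos: assumes "t 0 > 0" "\<forall>n. t (Suc n) = f (t n)" shows "t n > 0"
  by (induction n) (use assms f_pos in auto)

lemma orbit_funpow: assumes "\<forall>n. t (Suc n) = f (t n)" shows "t n = (f ^^ n) (t 0)"
  by (induction n) (use assms in auto)

lemma I_stay:
  assumes tS: "\<forall>n. t (Suc n) = f (t n)" and inv: "f ` {f m .. f (f m)} \<subseteq> {f m .. f (f m)}"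
    and tn: "t n \<in> {f m .. f (f m)}"
  shows "t (n + k) \<in> {f m .. f (f m)}"
proof (induction k)
  case 0 thus ?case using tn by simp
next
  case (Suc k)
  hence "f (t (n+k)) \<in> {f m .. f (f m)}" using inv by blast
  thus ?case using tS by simp
qed

lemma ev_in_I:
  assumes t0: "t 0 > 0" and tS: "\<forall>n. t (Suc n) = f (t n)"
    and inv: "f ` {f m .. f (f m)} \<subseteq> {f m .. f (f m)}"
    and ge: "\<forall>n\<ge>N. t n \<ge> f m"
  shows "\<exists>N'. \<forall>n\<ge>N'. t n \<in> {f m .. f (f m)}"
proof (cases "\<exists>n\<ge>N. t n \<in> {f m .. f (f m)}")
  case True
  then obtain n where n: "n \<ge> N" "t n \<in> {f m .. f (f m)}" by blast
  show ?thesis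
  proof (intro exI allI impI)
    fix k assume "k \<ge> n"
    then obtain j where "k = n + j" using le_Suc_ex by blast
    thus "t k \<in> {f m .. f (f m)}" using I_stay[OF tS inv n(2)] by simp
  qed
next
  case False
  hence gtb: "\<forall>n\<ge>N. t n > f (f m)" using ge by force
  have gtm: "\<forall>n\<ge>N. t n > m"
  proof (intro allI impI)
    fix n assume n: "n \<ge> N"
    show "t n > m"
    proof (rule ccontr)
      assume "\<not> t n > m"
      hence le: "t n \<le> m" by simp
      have bp: "f (f m) > 0" using beta_gt tpos by simp
      have "f (t n) \<ge> f m" using f_dec1' orbit_pos[OF t0 tS] le by simp
      moreover have "f (t n) < f (f (f m))" using f_dec1[OF bp _ le] gtb n by simp
      moreover have "f (f (f m)) < f (f m)" using f_lt_x beta_gt by simp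
      ultimately have "t (Suc n) \<in> {f m .. f (f m)}" using tS by simp
      thus False using False n by auto
    qed
  qed
  define X where "X k = t (N + k)" for k
  have Xd: "X (Suc k) < X k" for k
  proof -
    have "t (N+k) > m" using gtm by simp
    hence "f (t (N+k)) < t (N+k)" using f_lt_x tlt by simp
    thus ?thesis unfolding X_def using tS by simp
  qed
  have "decseq X" using Xd by (intro decseq_SucI) (simp add: less_imp_le)
  moreover have "\<forall>i. m \<le> X i" unfolding X_def using gtm by (simp add: less_imp_le)
  ultimately obtain L where L: "X \<longlonglongrightarrow> L" "\<forall>i. L \<le> X i" by (rule decseq_convergent)
  have Lm: "L \<ge> m" using LIMSEQ_le_const[OF L(1)] \<open>\<forall>i. m \<le> X i\<close> by blast
  hence Lp: "L > 0" using m_pos by simp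
  have "(\<lambda>k. X (Suc k)) \<longlonglongrightarrow> L" using LIMSEQ_Suc[OF L(1)] .
  moreover have "(\<lambda>k. X (Suc k)) = (\<lambda>k. f (X k))" unfolding X_def using tS by simp
  moreover have "(\<lambda>k. f (X k)) \<longlonglongrightarrow> f L" using isCont_tendsto_compose[OF f_cont[OF Lp] L(1)] .
  ultimately have "f L = L" using LIMSEQ_unique by metis
  hence "L = tbar" using tuniq Lp by blast
  thus ?thesis using Lm tlt by simp
qed

lemma trap:
  assumes tS: "\<forall>n. t (Suc n) = f (t n)" and bm: "f (f m) \<le> m"
    and tj: "f m \<le> t j" "t j \<le> m"
  shows "f m \<le> t (j + k) \<and> t (j + k) \<le> m"
proof (induction k)
  case 0 thus ?case using tj by simp
next
  case (Suc k)
  have p: "t (j+k) > 0" using Suc alpha_pos by simp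
  have "f (t (j+k)) \<ge> f m" using f_dec1'[OF p] Suc by simp
  moreover have "f (t (j+k)) \<le> f (f m)" using f_dec1'[OF alpha_pos] Suc by simp
  ultimately show ?case using tS bm by simp
qed

end


context setting begin

lemma key_step:
  assumes t0: "t 0 > 0" and tS: "\<forall>n. t (Suc n) = f (t n)"
    and h2: "\<forall>z. 0 < z \<and> z < f m \<longrightarrow> f (f z) > z" and bm: "f (f m) \<le> m"
  shows "n < k \<Longrightarrow> t n < f m \<Longrightarrow> t k < f m \<Longrightarrow> f (t n) > M \<and> f (f (t n)) \<le> t k"
proof (induction "k - n" arbitrary: n rule: less_induct)
  case less
  have tp: "\<And>i. t i > 0" using orbit_pos[OF t0 tS] by simp
  have am: "f m < m" using alpha_lt tlt by simp
  define P where "P j \<longleftrightarrow> n < j \<and> t j \<le> m" for j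
  have Pk: "P k" unfolding P_def using less am by simp
  define j where "j = (LEAST j. P j)"
  have Pj: "P j" unfolding j_def using Pk by (rule LeastI)
  have jk: "j \<le> k" unfolding j_def using Pk by (rule Least_le)
  have notP: "\<And>i. i < j \<Longrightarrow> \<not> P i" unfolding j_def by (rule not_less_Least)
  have nj: "n < j" "t j \<le> m" using Pj P_def by auto
  have between: "\<And>i. n < i \<Longrightarrow> i < j \<Longrightarrow> t i > m" using notP P_def by force
  have tjlt: "t j < f m"
  proof (rule ccontr)
    assume "\<not> t j < f m"
    hence "f m \<le> t j" by simp
    from trap[OF tS bm this nj(2), of "k - j"] jk have "f m \<le> t k" by simp
    thus False using less by simp
  qed
  have tn1: "t (Suc n) > tbar" using tS f_gt_tbar[OF tp] less alpha_lt by simp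
  have jne: "j \<noteq> Suc n"
  proof
    assume "j = Suc n"
    thus False using tn1 tjlt alpha_lt by simp
  qed
  hence j2: "Suc n < j" using nj by simp
  then obtain i where i: "j = Suc i" using lessE by blast
  have ni: "n < i" using j2 i by simp
  have chain: "\<And>l. n < l \<Longrightarrow> l < j \<Longrightarrow> t l \<le> t (Suc n)"
  proof -
    fix l assume "n < l" "l < j"
    thus "t l \<le> t (Suc n)"
    proof (induction l)
      case 0 thus ?case by simp
    next
      case (Suc l)
      show ?case
      proof (cases "l = n")
        case True thus ?thesis by simp
      next
        case False
        hence nl: "n < l" using Suc by simp
        have "t l > m" using between[OF nl] Suc by simp
        hence "f (t l) < t l" using f_lt_x tlt by simp
        thus ?thesis using Suc nl tS by simp
      qed
    qed
  qed
  have ym: "t i > m" using between[OF ni] i by simp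
  have yle: "t i \<le> t (Suc n)" using chain[OF ni] i by simp
  have yM: "t i > M"
  proof (rule ccontr)
    assume "\<not> t i > M"
    hence "f m \<le> f (t i)" using alpha_lower tp by simp
    thus False using tjlt i tS by simp
  qed
  have fM: "f (t n) > M" using yM yle tS by simp
  have fge: "f (f (t n)) \<le> t j"
    using f_dec2'[of "t i" "f (t n)"] yM yle tS i by simp
  show ?case
  proof (cases "j = k")
    case True thus ?thesis using fM fge by simp
  next
    case False
    hence jk': "j < k" using jk by simp
    have "f (f (t j)) \<le> t k" using less.hyps[of j] jk' nj less tjlt by simp
    moreover have "f (f (t j)) > t j" using h2 tp tjlt by simp
    ultimately show ?thesis using fM fge by simp
  qed
qed

lemma below_alpha_finite:
  assumes t0: "t 0 > 0" and tS: "\<forall>n. t (Suc n) = f (t n)"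
    and h2: "\<forall>z. 0 < z \<and> z < f m \<longrightarrow> f (f z) > z" and bm: "f (f m) \<le> m"
  shows "\<exists>N. \<forall>n\<ge>N. t n \<ge> f m"
proof (cases "finite {n. t n < f m}")
  case True
  then obtain N where N: "\<forall>n\<in>{n. t n < f m}. n < N" using finite_nat_set_iff_bounded by blast
  show ?thesis
  proof (intro exI allI impI)
    fix n assume "n \<ge> N"
    show "t n \<ge> f m"
    proof (rule ccontr)
      assume "\<not> f m \<le> t n"
      hence "n \<in> {n. t n < f m}" by simp
      hence "n < N" using N by blast
      thus False using \<open>n \<ge> N\<close> by simp
    qed
  qed
next
  case False
  then obtain r :: "nat \<Rightarrow> nat" where r: "strict_mono r" "\<forall>j. r j \<in> {n. t n < f m}"
    using infinite_enumerate by blast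
  have tp: "\<And>i. t i > 0" using orbit_pos[OF t0 tS] by simp
  define z where "z j = t (r j)" for j
  have zlt: "z j < f m" for j using r z_def by simp
  have K: "f (z j) > M \<and> f (f (z j)) \<le> z (Suc j)" for j
    unfolding z_def using key_step[OF t0 tS h2 bm] r strict_monoD[OF r(1), of j "Suc j"] by simp
  have zinc: "z j < z (Suc j)" for j
  proof -
    have "0 < z j" using tp z_def by simp
    hence "z j < f (f (z j))" using h2 zlt by blast
    thus ?thesis using K[of j] by simp
  qed
  have "incseq z" by (rule incseq_SucI) (use zinc less_imp_le in blast)
  moreover have "\<forall>i. z i \<le> f m" using zlt less_imp_le by blast
  ultimately obtain L where L: "z \<longlonglongrightarrow> L" "\<forall>i. z i \<le> L" by (rule incseq_convergent)
  have La: "L \<le> f m" using LIMSEQ_le_const2[OF L(1)] zlt less_imp_le by blast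
  have Lp: "L > 0" using L(2) tp z_def by (metis less_le_trans)
  have fLp: "f L > 0" using f_pos Lp by simp
  have c1: "(\<lambda>j. f (z j)) \<longlonglongrightarrow> f L" using isCont_tendsto_compose[OF f_cont[OF Lp] L(1)] .
  have c2: "(\<lambda>j. f (f (z j))) \<longlonglongrightarrow> f (f L)" using isCont_tendsto_compose[OF f_cont[OF fLp] c1] .
  have "M \<le> f L" using LIMSEQ_le_const[OF c1] K less_imp_le by blast
  moreover have "f (f L) \<le> L" using LIMSEQ_le[OF c2 LIMSEQ_Suc[OF L(1)]] K by blast
  ultimately show ?thesis
  proof (cases "L < f m")
    case True thus ?thesis using h2 Lp \<open>f (f L) \<le> L\<close> by force
  next
    case False
    hence "L = f m" using La by simp
    thus ?thesis using \<open>M \<le> f L\<close> bm m_lt_M by simp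
  qed
qed

end


context setting begin

lemma ff_cont: "x > 0 \<Longrightarrow> isCont (\<lambda>z. f (f z)) x"
  by (rule isCont_o2[OF f_cont f_cont]) (simp_all add: f_pos)

lemma tbar_lt_Ybig: "tbar < Ybig"
proof (rule ccontr)
  assume "\<not> tbar < Ybig"
  thus False using big_props(1)[of tbar] tfix by simp
qed

lemma D_neg_right:
  assumes nz: "\<And>z. l < z \<Longrightarrow> f (f z) \<noteq> z" and l: "l \<ge> tbar" and x: "x > l"
  shows "f (f x) < x"
proof -
  define R where "R = max x Ybig + 1"
  define Y where "Y = max Ybig (l + 1)"
  have c1: "isCont (\<lambda>z. f (f z) - z) z" if "l < z" "z < R" for z
    using that tpos l ff_cont by (auto intro!: continuous_intros)
  have c2: "(\<lambda>z. f (f z) - z) z \<noteq> 0" if "l < z" "z < R" for z using nz that by simp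
  have c4: "(\<lambda>z. f (f z) - z) Y < 0" using big_props(2)[of Y] Y_def by simp
  have c5: "l < Y" unfolding Y_def by simp
  have c6: "Y < R" unfolding Y_def R_def using x by (auto simp: max_def)
  have c7: "x < R" unfolding R_def by simp
  have "(\<lambda>z. f (f z) - z) x < 0"
    by (rule sign_const[of l R "\<lambda>z. f (f z) - z" Y x, OF c1 c2 c5 c6 c4 x c7])
  thus ?thesis by simp
qed

lemma mirror:
  assumes x: "0 < x" "x \<le> m" and lt: "f (f x) < x"
  shows "f (f (f x)) > f x"
  using f_dec1[of "f (f x)" x] f_pos x lt by simp

lemma nocycle_nz:
  assumes nc: "\<nexists>p q. two_cycle f p q" and x: "x > 0" "x \<noteq> tbar"
  shows "f (f x) \<noteq> x"
proof
  assume ffx: "f (f x) = x"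
  have "f x \<noteq> x" using tuniq x by blast
  hence "two_cycle f x (f x)" unfolding two_cycle_def using x f_pos ffx by auto
  thus False using nc by blast
qed

lemma nocycle_right: assumes nc: "\<nexists>p q. two_cycle f p q" and x: "x > tbar" shows "f (f x) < x"
  by (rule D_neg_right[OF _ order_refl x]) (use nocycle_nz[OF nc] tpos in auto)

lemma nocycle_left: assumes nc: "\<nexists>p q. two_cycle f p q" and x: "0 < x" "x < tbar"
  shows "f (f x) > x"
proof (rule ccontr)
  assume "\<not> f (f x) > x"
  hence "f (f x) < x" using nocycle_nz[OF nc, of x] x by force
  hence "f (f (f x)) > f x" using mirror x tlt by simp
  moreover have "f x > tbar" using f_gt_tbar x by simp
  ultimately show False using nocycle_right[OF nc, of "f x"] by simp
qed

lemma even_conv: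
  assumes bm: "f (f m) \<le> m" and inv: "f ` {f m .. f (f m)} \<subseteq> {f m .. f (f m)}"
    and e0: "e 0 \<in> {f m .. f (f m)}" and eS: "\<forall>k. e (Suc k) = f (f (e k))"
  shows "\<exists>L. e \<longlonglongrightarrow> L \<and> L \<in> {f m .. f (f m)} \<and> f (f L) = L \<and> (incseq e \<or> decseq e)"
proof -
  have eI: "e k \<in> {f m .. f (f m)}" for k
  proof (induction k)
    case 0 thus ?case using e0 .
  next
    case (Suc k)
    hence "f (e k) \<in> {f m .. f (f m)}" using inv by blast
    hence "f (f (e k)) \<in> {f m .. f (f m)}" using inv by blast
    thus ?case using eS by simp
  qed
  have hmono: "f (f x) \<le> f (f y)" if "x \<in> {f m .. f (f m)}" "y \<in> {f m .. f (f m)}" "x \<le> y" for x y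
  proof -
    have xp: "x > 0" using that alpha_pos by simp
    have "f y \<le> f x" using f_dec1'[OF xp] that bm by simp
    moreover have "f y \<in> {f m .. f (f m)}" "f x \<in> {f m .. f (f m)}" using inv that by blast+
    ultimately show ?thesis using f_dec1' alpha_pos bm by simp
  qed
  have mono_or: "incseq e \<or> decseq e"
  proof (cases "e 0 \<le> e 1")
    case True
    have "e k \<le> e (Suc k)" for k
    proof (induction k)
      case 0 thus ?case using True by simp
    next
      case (Suc k) thus ?case using hmono[OF eI[of k] eI[of "Suc k"] Suc.IH] eS by simp
    qed
    thus ?thesis by (simp add: incseq_SucI)
  next
    case False
    have "e (Suc k) \<le> e k" for k
    proof (induction k)
      case 0 thus ?case using False by simp
    next
      case (Suc k) thus ?case using hmono[OF eI[of "Suc k"] eI[of k] Suc.IH] eS by simp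
    qed
    thus ?thesis by (simp add: decseq_SucI)
  qed
  obtain L where L: "e \<longlonglongrightarrow> L"
  proof (cases "incseq e")
    case True
    have "\<forall>i. e i \<le> f (f m)" using eI by simp
    thus ?thesis using incseq_convergent[OF True] that by metis
  next
    case False
    hence "decseq e" using mono_or by simp
    moreover have "\<forall>i. f m \<le> e i" using eI by simp
    ultimately show ?thesis using decseq_convergent that by metis
  qed
  have LI: "L \<in> {f m .. f (f m)}"
    using LIMSEQ_le_const[OF L] LIMSEQ_le_const2[OF L] eI by auto
  have Lp: "L > 0" using LI alpha_pos by simp
  have "(\<lambda>k. f (f (e k))) \<longlonglongrightarrow> f (f L)" using isCont_tendsto_compose[OF ff_cont[OF Lp] L] .
  moreover have "(\<lambda>k. f (f (e k))) \<longlonglongrightarrow> L" using LIMSEQ_Suc[OF L] eS by simp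
  ultimately have "f (f L) = L" using LIMSEQ_unique by blast
  thus ?thesis using L LI mono_or by blast
qed

lemma eventually_I_conv:
  assumes tS: "\<forall>n. t (Suc n) = f (t n)"
    and bm: "f (f m) \<le> m" and inv: "f ` {f m .. f (f m)} \<subseteq> {f m .. f (f m)}"
    and ev: "\<forall>n\<ge>N. t n \<in> {f m .. f (f m)}"
  shows "\<exists>L. (\<lambda>k. t (2*(N+k))) \<longlonglongrightarrow> L \<and> L \<in> {f m .. f (f m)} \<and> f (f L) = L
           \<and> (incseq (\<lambda>k. t (2*(N+k))) \<or> decseq (\<lambda>k. t (2*(N+k))))
           \<and> (\<lambda>n. t (2*n)) \<longlonglongrightarrow> L \<and> (\<lambda>n. t (2*n+1)) \<longlonglongrightarrow> f L"
proof -
  define e where "e k = t (2*(N+k))" for k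
  have e0: "e 0 \<in> {f m .. f (f m)}" unfolding e_def using ev by simp
  have eS: "\<forall>k. e (Suc k) = f (f (e k))" unfolding e_def using tS
    by (simp add: numeral_2_eq_2)
  obtain L where L: "e \<longlonglongrightarrow> L" "L \<in> {f m .. f (f m)}" "f (f L) = L" "incseq e \<or> decseq e"
    using even_conv[OF bm inv e0 eS] by blast
  have Lp: "L > 0" using L alpha_pos by simp
  have ev2: "(\<lambda>n. t (2*n)) \<longlonglongrightarrow> L"
  proof (rule LIMSEQ_offset[where k=N])
    show "(\<lambda>n. t (2 * (n + N))) \<longlonglongrightarrow> L" using L(1) unfolding e_def by (simp add: add.commute)
  qed
  have "(\<lambda>n. f (t (2*n))) \<longlonglongrightarrow> f L" using isCont_tendsto_compose[OF f_cont[OF Lp] ev2] .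
  hence od: "(\<lambda>n. t (2*n+1)) \<longlonglongrightarrow> f L" using tS by simp
  show ?thesis using L ev2 od unfolding e_def by blast
qed

end


context setting begin

definition Q2 where "Q2 y = b*y^2 + 2*c*y + 3*d"
definition r where "r y = sqrt (Q2 y)"
definition fd where "fd y = - Q2 y / y^4"
definition B where "B y = y^2 / r y"
definition B1 where "B1 y = (b*y^3 + 3*c*y^2 + 6*d*y) / (r y)^3"
definition B2 where "B2 y = 3*((c^2 - b*d)*y^2 + 4*c*d*y + 6*d^2) / (r y)^5"

lemma Q2_pos: assumes "0 < y" "y < m" shows "Q2 y > 0"
proof -
  have "(y-m)*(y-M) > 0" using assms m_lt_M by (intro mult_neg_neg) auto
  thus ?thesis unfolding Q2_def using Q2_fact[of y] b by (simp add: mult.assoc)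
qed

lemma r_pos: "0 < y \<Longrightarrow> y < m \<Longrightarrow> r y > 0" unfolding r_def using Q2_pos by simp
lemma r_sq: "0 < y \<Longrightarrow> y < m \<Longrightarrow> r y * r y = Q2 y" unfolding r_def using Q2_pos
  by (simp add: less_imp_le)

lemma r_deriv: assumes "0 < y" "y < m" shows "DERIV r y :> (b*y + c) / r y"
proof -
  have q: "DERIV Q2 y :> 2*b*y + 2*c" unfolding Q2_def
    by (auto intro!: derivative_eq_intros simp: power2_eq_square)
  have "DERIV (\<lambda>y. sqrt (Q2 y)) y :> inverse (sqrt (Q2 y)) / 2 * (2*b*y + 2*c)"
    by (rule DERIV_chain2[OF DERIV_real_sqrt[OF Q2_pos[OF assms]] q])
  moreover have "inverse (sqrt (Q2 y)) / 2 * (2*b*y + 2*c) = (b*y + c) / r y"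
    unfolding r_def using Q2_pos[OF assms] by (simp add: field_simps)
  ultimately show ?thesis unfolding r_def by (rule DERIV_cong)
qed

lemma B_deriv: assumes y: "0 < y" "y < m" shows "DERIV B y :> B1 y"
proof -
  have rp: "r y > 0" using r_pos y by simp
  have rs: "r y * r y = Q2 y" using r_sq y by simp
  have "DERIV (\<lambda>y. y^2 / r y) y :> ((2*y) * r y - y^2 * ((b*y + c) / r y)) / (r y * r y)"
    using DERIV_divide[OF DERIV_pow[of 2 y, simplified] r_deriv[OF y]] rp by simp
  moreover have "((2*y) * r y - y^2 * ((b*y + c) / r y)) / (r y * r y) = B1 y"
  proof -
    have "((2*y) * r y - y^2 * ((b*y + c) / r y)) / (r y * r y)
        = (2*y*(r y * r y) - y^2*(b*y+c)) / (r y)^3"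
      using rp by (simp add: field_simps power3_eq_cube)
    also have "\<dots> = B1 y" unfolding B1_def rs Q2_def by (simp add: algebra_simps power2_eq_square power3_eq_cube)
    finally show ?thesis .
  qed
  ultimately show ?thesis unfolding B_def by simp
qed

lemma B1_deriv: assumes y: "0 < y" "y < m" shows "DERIV B1 y :> B2 y"
proof -
  have rp: "r y > 0" using r_pos y by simp
  have rs: "r y * r y = Q2 y" using r_sq y by simp
  define N where "N y = b*y^3 + 3*c*y^2 + 6*d*y" for y
  have dN: "DERIV N y :> 3*b*y^2 + 6*c*y + 6*d" unfolding N_def
    by (auto intro!: derivative_eq_intros simp: power2_eq_square)
  have dr3: "DERIV (\<lambda>y. (r y)^3) y :> real 3 * (r y)^(3 - 1) * ((b*y + c) / r y)"
    using DERIV_chain2[OF DERIV_pow r_deriv[OF y], of 3] by simp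
  have "DERIV (\<lambda>y. N y / (r y)^3) y :>
      ((3*b*y^2 + 6*c*y + 6*d) * (r y)^3 - N y * (real 3 * (r y)^(3 - 1) * ((b*y + c) / r y))) / ((r y)^3 * (r y)^3)"
    using DERIV_divide[OF dN dr3] rp by simp
  moreover have "((3*b*y^2 + 6*c*y + 6*d) * (r y)^3 - N y * (real 3 * (r y)^(3 - 1) * ((b*y + c) / r y))) / ((r y)^3 * (r y)^3) = B2 y"
  proof -
    have "((3*b*y^2 + 6*c*y + 6*d) * (r y)^3 - N y * (real 3 * (r y)^(3 - 1) * ((b*y + c) / r y))) / ((r y)^3 * (r y)^3)
        = ((3*b*y^2 + 6*c*y + 6*d) * (r y * r y) - 3 * N y * (b*y + c)) / (r y)^5"
      using rp by (simp add: field_simps power2_eq_square power3_eq_cube numeral_eq_Suc)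
    also have "\<dots> = B2 y" unfolding B2_def rs Q2_def N_def
      by (simp add: algebra_simps power2_eq_square power3_eq_cube)
    finally show ?thesis .
  qed
  ultimately show ?thesis unfolding B1_def N_def by simp
qed

lemma B2_pos: assumes y: "0 < y" "y < m" shows "B2 y > 0"
proof -
  have "b*d > 0" using b d by simp
  hence cb: "c^2 - b*d > 0" using c_sq by simp
  have "(c^2 - b*d)*((c^2 - b*d)*y^2 + 4*c*d*y + 6*d^2) = ((c^2-b*d)*y + 2*c*d)^2 + 2*d^2*(c^2 - 3*b*d)"
    by (simp add: algebra_simps power2_eq_square)
  moreover have "2*d^2*(c^2 - 3*b*d) > 0" using d c_sq by simp
  ultimately have "(c^2 - b*d)*((c^2 - b*d)*y^2 + 4*c*d*y + 6*d^2) > 0"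
    by (smt (verit) zero_le_power2)
  hence "(c^2 - b*d)*y^2 + 4*c*d*y + 6*d^2 > 0" using cb by (simp add: zero_less_mult_iff)
  thus ?thesis unfolding B2_def using r_pos[OF y] by simp
qed

lemma B_pos: "0 < y \<Longrightarrow> y < m \<Longrightarrow> B y > 0" unfolding B_def using r_pos by simp

lemma fd_B: assumes y: "0 < y" "y < m" shows "fd y = - 1 / (B y)^2"
  unfolding fd_def B_def using r_sq[OF y] r_pos[OF y] y
  by (simp add: field_simps power2_eq_square power4_eq_xxxx)

lemma f_deriv2: "y > 0 \<Longrightarrow> DERIV f y :> fd y"
  using f_deriv[of y] Q2_fact[of y] unfolding fd_def Q2_def by simp

end


context setting begin

definition K where "K x = B (f x) * B x"
definition K1 where "K1 x = - B1 (f x) / B x + B (f x) * B1 x"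
definition K2 where "K2 x = B2 (f x) / (B x)^3 + B (f x) * B2 x"

lemma K_deriv: assumes x: "0 < x" "x < m" and fx: "0 < f x" "f x < m"
  shows "DERIV K x :> K1 x"
proof -
  have d1: "DERIV (\<lambda>x. B (f x)) x :> B1 (f x) * fd x"
    by (rule DERIV_chain2[OF B_deriv[OF fx] f_deriv2[OF x(1)]])
  have d: "DERIV (\<lambda>x. B (f x) * B x) x :> B1 (f x) * fd x * B x + B1 x * B (f x)"
    by (rule DERIV_mult[OF d1 B_deriv[OF x]])
  have Bp: "B x > 0" using B_pos x by simp
  have "B1 (f x) * fd x * B x + B1 x * B (f x) = K1 x"
    unfolding K1_def fd_B[OF x] using Bp by (simp add: field_simps power2_eq_square)
  thus ?thesis using d unfolding K_def by (rule DERIV_cong[rotated])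
qed

lemma K1_deriv: assumes x: "0 < x" "x < m" and fx: "0 < f x" "f x < m"
  shows "DERIV K1 x :> K2 x"
proof -
  have d1: "DERIV (\<lambda>x. B1 (f x)) x :> B2 (f x) * fd x"
    by (rule DERIV_chain2[OF B1_deriv[OF fx] f_deriv2[OF x(1)]])
  have d2: "DERIV (\<lambda>x. B (f x)) x :> B1 (f x) * fd x"
    by (rule DERIV_chain2[OF B_deriv[OF fx] f_deriv2[OF x(1)]])
  have Bp: "B x > 0" using B_pos x by simp
  have da: "DERIV (\<lambda>x. B1 (f x) / B x) x :> (B2 (f x) * fd x * B x - B1 (f x) * B1 x) / (B x * B x)"
    using DERIV_divide[OF d1 B_deriv[OF x]] Bp by simp
  have db: "DERIV (\<lambda>x. B (f x) * B1 x) x :> B1 (f x) * fd x * B1 x + B2 x * B (f x)"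
    by (rule DERIV_mult[OF d2 B1_deriv[OF x]])
  have d: "DERIV (\<lambda>x. - (B1 (f x) / B x) + B (f x) * B1 x) x :>
      - ((B2 (f x) * fd x * B x - B1 (f x) * B1 x) / (B x * B x)) + (B1 (f x) * fd x * B1 x + B2 x * B (f x))"
    by (rule DERIV_add[OF DERIV_minus[OF da] db])
  have "- ((B2 (f x) * fd x * B x - B1 (f x) * B1 x) / (B x * B x)) + (B1 (f x) * fd x * B1 x + B2 x * B (f x)) = K2 x"
    unfolding K2_def fd_B[OF x] using Bp by (simp add: field_simps power2_eq_square power3_eq_cube)
  moreover have "(\<lambda>x. - (B1 (f x) / B x) + B (f x) * B1 x) = K1"
    unfolding K1_def by (rule ext) simp
  ultimately show ?thesis using d by (metis DERIV_cong)
qed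

lemma K2_pos: assumes x: "0 < x" "x < m" and fx: "0 < f x" "f x < m" shows "K2 x > 0"
  unfolding K2_def using B2_pos[OF x] B2_pos[OF fx] B_pos[OF x] B_pos[OF fx]
  by (intro add_pos_pos divide_pos_pos mult_pos_pos) auto

lemma K_pos: assumes x: "0 < x" "x < m" and fx: "0 < f x" "f x < m" shows "K x > 0"
  unfolding K_def using B_pos[OF x] B_pos[OF fx] by simp

lemma hderiv_K: assumes x: "0 < x" "x < m" and fx: "0 < f x" "f x < m"
  shows "fd (f x) * fd x = 1 / (K x)^2"
  unfolding K_def fd_B[OF x] fd_B[OF fx] using B_pos[OF x] B_pos[OF fx]
  by (simp add: field_simps power2_eq_square)

lemma D_deriv: assumes x: "0 < x" shows "DERIV (\<lambda>z. f (f z) - z) x :> fd (f x) * fd x - 1"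
  using DERIV_diff[OF DERIV_chain2[OF f_deriv2[OF f_pos[OF x]] f_deriv2[OF x]] DERIV_ident] .

end


context setting begin

lemma cycle_signs:
  assumes p0: "0 < p" "p < tbar" "tbar < q" "q \<le> m" "f p = q" "f q = p"
    and nz: "\<forall>x. p < x \<and> x < q \<and> x \<noteq> tbar \<longrightarrow> f (f x) \<noteq> x"
  shows "\<forall>x. tbar < x \<and> x < q \<longrightarrow> f (f x) > x" "\<forall>x. p < x \<and> x < tbar \<longrightarrow> f (f x) < x"
proof -
  have maps: "p < f x \<and> f x < q" if "p < x" "x < q" for x
  proof -
    have "f x < f p" using f_dec1[of p x] p0 that by simp
    moreover have "f q < f x" using f_dec1[of x q] p0 that by simp
    ultimately show ?thesis using p0 by simp
  qed
  have dom: "0 < x \<and> x < m \<and> 0 < f x \<and> f x < m" if "p < x" "x < q" for x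
    using maps[OF that] that p0 by simp
  have Dcont: "isCont (\<lambda>z. f (f z) - z) z" if "0 < z" for z
    using that ff_cont by (auto intro!: continuous_intros)
  have R: "\<forall>x. tbar < x \<and> x < q \<longrightarrow> f (f x) > x"
  proof (rule ccontr)
    assume "\<not> ?thesis"
    then obtain x2 where x2: "tbar < x2" "x2 < q" "f (f x2) \<le> x2" by force
    have "p < x2" "x2 \<noteq> tbar" using x2 p0 by auto
    hence "f (f x2) \<noteq> x2" using nz x2 by blast
    hence "f (f x2) < x2" using x2 by simp
    have negR: "f (f x) < x" if "tbar < x" "x < q" for x
    proof -
      have "(\<lambda>z. f (f z) - z) x < 0"
      proof (rule sign_const[of tbar q "\<lambda>z. f (f z) - z" x2 x])
        show "isCont (\<lambda>z. f (f z) - z) z" if "tbar < z" "z < q" for z using Dcont that tpos by simp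
        show "(\<lambda>z. f (f z) - z) z \<noteq> 0" if "tbar < z" "z < q" for z using nz that p0 by auto
      qed (use x2 \<open>f (f x2) < x2\<close> that in auto)
      thus ?thesis by simp
    qed
    have posL: "f (f x) > x" if "p < x" "x < tbar" for x
    proof (rule ccontr)
      assume "\<not> f (f x) > x"
      hence lt: "f (f x) < x" using nz that p0 by force
      have "f (f (f x)) > f x" using mirror[of x] lt that p0 by simp
      moreover have "tbar < f x" using f_gt_tbar that p0 by simp
      moreover have "f x < q" using maps that p0 by simp
      ultimately show False using negR by force
    qed
    define x1 where "x1 = (p + tbar)/2"
    have x1: "p < x1" "x1 < tbar" unfolding x1_def using p0 by simp_all
    obtain xi1 where xi1: "p < xi1" "xi1 < x1"
        "(\<lambda>z. f (f z) - z) x1 - (\<lambda>z. f (f z) - z) p = (x1 - p) * (fd (f xi1) * fd xi1 - 1)"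
      using MVT2[OF x1(1), of "\<lambda>z. f (f z) - z" "\<lambda>z. fd (f z) * fd z - 1"] D_deriv p0 by force
    have "fd (f xi1) * fd xi1 - 1 > 0"
    proof -
      have "(x1 - p) * (fd (f xi1) * fd xi1 - 1) > 0" using xi1(3) posL[OF x1] p0 by simp
      thus ?thesis using x1 by (simp add: zero_less_mult_iff)
    qed
    define x3 where "x3 = (tbar + q)/2"
    have x3: "tbar < x3" "x3 < q" unfolding x3_def using p0 by simp_all
    obtain xi2 where xi2: "x3 < xi2" "xi2 < q"
        "(\<lambda>z. f (f z) - z) q - (\<lambda>z. f (f z) - z) x3 = (q - x3) * (fd (f xi2) * fd xi2 - 1)"
      using MVT2[OF x3(2), of "\<lambda>z. f (f z) - z" "\<lambda>z. fd (f z) * fd z - 1"] D_deriv p0 x3 tpos by force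
    have "fd (f xi2) * fd xi2 - 1 > 0"
    proof -
      have "(q - x3) * (fd (f xi2) * fd xi2 - 1) > 0" using xi2(3) negR[OF x3] p0 by simp
      thus ?thesis using x3 by (simp add: zero_less_mult_iff)
    qed
    have tder: "fd (f tbar) * fd tbar - 1 \<le> 0"
    proof (rule ccontr)
      assume "\<not> ?thesis"
      hence "fd (f tbar) * fd tbar - 1 > 0" by simp
      then obtain dl where dl: "dl > 0" "\<forall>h>0. h < dl \<longrightarrow> (\<lambda>z. f (f z) - z) tbar < (\<lambda>z. f (f z) - z) (tbar + h)"
        using DERIV_pos_inc_right[OF D_deriv[OF tpos]] by blast
      define h where "h = min (dl/2) ((q - tbar)/2)"
      have hq: "h \<le> (q - tbar)/2" unfolding h_def by (rule min.cobounded2)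
      have hd: "h \<le> dl/2" unfolding h_def by (rule min.cobounded1)
      have h0: "h > 0" unfolding h_def using dl p0 by simp
      have h3': "(q - tbar)/2 < q - tbar" using \<open>tbar < q\<close> by simp
      have h3: "tbar + h < q" using hq h3' by simp
      have h: "h > 0" "h < dl" "tbar + h < q" using hd h0 dl h3 by linarith+
      have "f (f tbar) - tbar < f (f (tbar + h)) - (tbar + h)" using dl h by simp
      moreover have "f (f (tbar + h)) < tbar + h" using negR h by simp
      ultimately show False using tfix by simp
    qed
    have xi1d: "0 < xi1 \<and> xi1 < m \<and> 0 < f xi1 \<and> f xi1 < m" using dom xi1 x1 p0 by simp
    have xi2d: "0 < xi2 \<and> xi2 < m \<and> 0 < f xi2 \<and> f xi2 < m" using dom xi2 x3 p0 by simp
    have td: "0 < tbar \<and> tbar < m \<and> 0 < f tbar \<and> f tbar < m" using tpos tlt tfix by simp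
    have Klt1: "K xi1 < 1" "K xi2 < 1"
    proof -
      show "K xi1 < 1"
      proof (rule ccontr)
        assume "\<not> K xi1 < 1"
        hence "(K xi1)^2 \<ge> 1" by (simp add: one_le_power)
        hence "1 / (K xi1)^2 \<le> 1" by (simp add: divide_le_eq)
        thus False using hderiv_K xi1d \<open>fd (f xi1) * fd xi1 - 1 > 0\<close> by simp
      qed
      show "K xi2 < 1"
      proof (rule ccontr)
        assume "\<not> K xi2 < 1"
        hence "(K xi2)^2 \<ge> 1" by (simp add: one_le_power)
        hence "1 / (K xi2)^2 \<le> 1" by (simp add: divide_le_eq)
        thus False using hderiv_K xi2d \<open>fd (f xi2) * fd xi2 - 1 > 0\<close> by simp
      qed
    qed
    have Kt: "K tbar \<ge> 1"
    proof (rule ccontr)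
      assume "\<not> K tbar \<ge> 1"
      hence "K tbar < 1" by simp
      moreover have "K tbar > 0" using K_pos td by simp
      ultimately have "(K tbar)^2 < 1" by (simp add: power_less_one_iff abs_less_iff)
      hence "1 / (K tbar)^2 > 1" using \<open>K tbar > 0\<close> by simp
      thus False using hderiv_K td tder by simp
    qed
    have inpq: "p < z \<and> z < q" if "xi1 \<le> z" "z \<le> xi2" for z using that xi1 xi2 x1 x3 by simp
    obtain e1 where e1: "xi1 < e1" "e1 < tbar" "K tbar - K xi1 = (tbar - xi1) * K1 e1"
      using MVT2[of xi1 tbar K K1] K_deriv dom inpq xi1 x1 x3 xi2 by force
    obtain e2 where e2: "tbar < e2" "e2 < xi2" "K xi2 - K tbar = (xi2 - tbar) * K1 e2"
      using MVT2[of tbar xi2 K K1] K_deriv dom inpq xi1 x1 x3 xi2 by force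
    have "K1 e1 > 0"
    proof -
      have "(tbar - xi1) * K1 e1 > 0" using e1 Klt1 Kt by simp
      thus ?thesis using e1 by (simp add: zero_less_mult_iff)
    qed
    moreover have "K1 e2 < 0"
    proof -
      have "(xi2 - tbar) * K1 e2 < 0" using e2 Klt1 Kt by simp
      thus ?thesis using e2 by (simp add: mult_less_0_iff)
    qed
    moreover have "K1 e1 < K1 e2"
    proof (rule DERIV_pos_imp_increasing[of e1 e2 K1])
      show "e1 < e2" using e1 e2 by simp
      fix z assume "e1 \<le> z" "z \<le> e2"
      hence "p < z \<and> z < q" using inpq e1 e2 by simp
      thus "\<exists>y. DERIV K1 z :> y \<and> y > 0" using K1_deriv K2_pos dom by blast
    qed
    ultimately show False by simp
  qed
  show "\<forall>x. tbar < x \<and> x < q \<longrightarrow> f (f x) > x" using R .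
  show "\<forall>x. p < x \<and> x < tbar \<longrightarrow> f (f x) < x"
  proof (intro allI impI)
    fix x assume x: "p < x \<and> x < tbar"
    show "f (f x) < x"
    proof (rule ccontr)
      assume "\<not> f (f x) < x"
      hence gt: "f (f x) > x" using nz x p0 by force
      have ffx: "p < f (f x) \<and> f (f x) < q" using maps maps x p0 by force
      have "f (f (f x)) < f x" using f_dec1[of x "f (f x)"] gt ffx x p0 by simp
      moreover have "tbar < f x" using f_gt_tbar x p0 by simp
      moreover have "f x < q" using maps x p0 by simp
      ultimately show False using R by force
    qed
  qed
qed

end


context setting begin

lemma hmono:
  assumes bm: "f (f m) \<le> m" and inv: "f ` {f m .. f (f m)} \<subseteq> {f m .. f (f m)}"
    and xy: "x \<in> {f m .. f (f m)}" "y \<in> {f m .. f (f m)}" "x \<le> y"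
  shows "f (f x) \<le> f (f y)"
proof -
  have xp: "x > 0" using xy alpha_pos by simp
  have "f y \<le> f x" using f_dec1'[OF xp] xy bm by simp
  moreover have "f y \<in> {f m .. f (f m)}" "f x \<in> {f m .. f (f m)}" using inv xy by blast+
  ultimately show ?thesis using f_dec1' alpha_pos bm by simp
qed

lemma inv_of_bm: assumes bm: "f (f m) \<le> m" shows "f ` {f m .. f (f m)} \<subseteq> {f m .. f (f m)}"
proof (rule invariance, intro allI impI)
  fix x assume "m \<le> x \<and> x \<le> f (f m)"
  hence "x = m" using bm by simp
  thus "f m \<le> f x" by simp
qed

lemma partA:
  assumes t0: "t 0 > 0" and tS: "\<forall>n. t (Suc n) = f (t n)"
  shows "((c \<le> - 2 * sqrt (b * d) \<or> (c > - 2 * sqrt (b * d) \<and> f (f m) \<le> - d * m / (c * m + 2 * d)))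
           \<longrightarrow> f ` {f m .. f (f m)} \<subseteq> {f m .. f (f m)})
       \<and> (c \<le> - 2 * sqrt (b * d) \<longrightarrow> (\<exists>N. \<forall>n\<ge>N. t n \<in> {f m .. f (f m)}))"
proof (intro conjI impI)
  assume H: "c \<le> - 2 * sqrt (b * d) \<or> (c > - 2 * sqrt (b * d) \<and> f (f m) \<le> - d * m / (c * m + 2 * d))"
  show "f ` {f m .. f (f m)} \<subseteq> {f m .. f (f m)}"
  proof (rule invariance, intro allI impI)
    fix x assume x: "m \<le> x \<and> x \<le> f (f m)"
    show "f m \<le> f x"
    proof (cases "c \<le> - 2 * sqrt (b * d)")
      case True
      have "x > 0" using x m_pos by simp
      thus ?thesis using partA_H1[OF True] by blast
    next
      case False
      hence c: "c > - 2 * sqrt (b * d)" by simp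
      hence "f (f m) \<le> - d * m / (c * m + 2 * d)" using H False by blast
      hence "x \<le> - d * m / (c * m + 2 * d)" using x by linarith
      thus ?thesis using partA_H2[OF c] x by blast
    qed
  qed
next
  assume c: "c \<le> - 2 * sqrt (b * d)"
  have inv: "f ` {f m .. f (f m)} \<subseteq> {f m .. f (f m)}"
  proof (rule invariance, intro allI impI)
    fix x assume "m \<le> x \<and> x \<le> f (f m)"
    hence "x > 0" using m_pos by simp
    thus "f m \<le> f x" by (rule partA_H1[OF c])
  qed
  have "\<forall>n\<ge>1. t n \<ge> f m"
  proof (intro allI impI)
    fix n :: nat assume "n \<ge> 1"
    then obtain k where "n = Suc k" by (cases n) auto
    moreover have "t k > 0" using orbit_pos[OF t0 tS] by blast
    ultimately show "t n \<ge> f m" using partA_H1[OF c \<open>t k > 0\<close>] tS by simp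
  qed
  thus "\<exists>N. \<forall>n\<ge>N. t n \<in> {f m .. f (f m)}" by (rule ev_in_I[OF t0 tS inv])
qed

lemma partB:
  assumes t0: "t 0 > 0" and tS: "\<forall>n. t (Suc n) = f (t n)" and nc: "\<nexists>p q. two_cycle f p q"
  shows "t \<longlonglongrightarrow> tbar"
proof -
  have bm: "f (f m) \<le> m" using nocycle_right[OF nc, of m] tlt by simp
  have inv: "f ` {f m .. f (f m)} \<subseteq> {f m .. f (f m)}" using inv_of_bm[OF bm] .
  have h2: "\<forall>z. 0 < z \<and> z < f m \<longrightarrow> f (f z) > z"
  proof (intro allI impI)
    fix z assume z: "0 < z \<and> z < f m"
    hence "z < tbar" using alpha_lt by simp
    thus "f (f z) > z" using nocycle_left[OF nc] z by simp
  qed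
  obtain N0 where "\<forall>n\<ge>N0. t n \<ge> f m" using below_alpha_finite[OF t0 tS h2 bm] by blast
  then obtain N where N: "\<forall>n\<ge>N. t n \<in> {f m .. f (f m)}" using ev_in_I[OF t0 tS inv] by blast
  obtain L where L: "L \<in> {f m .. f (f m)}" "f (f L) = L"
      "(\<lambda>n. t (2*n)) \<longlonglongrightarrow> L" "(\<lambda>n. t (2*n+1)) \<longlonglongrightarrow> f L"
    using eventually_I_conv[OF tS bm inv N] by blast
  have Lp: "L > 0" using L alpha_pos by simp
  have "L = tbar" using nocycle_nz[OF nc Lp] L(2) by blast
  hence "(\<lambda>n. t (2*n)) \<longlonglongrightarrow> tbar" "(\<lambda>n. t (2*n+1)) \<longlonglongrightarrow> tbar" using L(3,4) tfix by simp_all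
  thus ?thesis by (rule LIMSEQ_even_odd)
qed

lemma partC:
  assumes t0: "t 0 > 0" and tS: "\<forall>n. t (Suc n) = f (t n)"
    and tc: "two_cycle f p q" and pq: "p < tbar" "tbar < q" "q \<le> m"
    and uq: "\<forall>p' q'. two_cycle f p' q' \<longrightarrow> {p', q'} = {p, q}"
  shows "(tbar < - d * M / (c * M + 2 * d) \<longrightarrow> {s. s > 0 \<and> (\<exists>n. (f ^^ n) s = tbar)} = {tbar})
       \<and> (t 0 \<notin> {s. s > 0 \<and> (\<exists>n. (f ^^ n) s = tbar)} \<longrightarrow> conv_two_cycle t p q)
       \<and> (t 0 \<in> {s. s > 0 \<and> (\<exists>n. (f ^^ n) s = tbar)} \<longrightarrow> t \<longlonglongrightarrow> tbar)"
proof (intro conjI impI)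
  have p0: "0 < p" "f p = q" "f q = p" using tc unfolding two_cycle_def by auto
  have fix2: "x = tbar \<or> x = p \<or> x = q" if "x > 0" "f (f x) = x" for x
  proof (cases "f x = x")
    case True thus ?thesis using tuniq that by blast
  next
    case False
    hence "two_cycle f x (f x)" unfolding two_cycle_def using that f_pos by auto
    hence "{x, f x} = {p, q}" using uq by blast
    hence "x \<in> {p, q}" by blast
    thus ?thesis by blast
  qed
  have nz: "\<forall>x. p < x \<and> x < q \<and> x \<noteq> tbar \<longrightarrow> f (f x) \<noteq> x"
  proof (intro allI impI notI)
    fix x assume x: "p < x \<and> x < q \<and> x \<noteq> tbar" and e: "f (f x) = x"
    have "x > 0" using x p0 by simp
    thus False using fix2[OF _ e] x by simp
  qed
  have sg: "\<forall>x. tbar < x \<and> x < q \<longrightarrow> f (f x) > x" "\<forall>x. p < x \<and> x < tbar \<longrightarrow> f (f x) < x"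
    using cycle_signs[OF p0(1) pq p0(2,3) nz] by blast+
  have right: "f (f x) < x" if "x > q" for x
  proof (rule D_neg_right[of q])
    fix z assume z: "q < z"
    hence "z > 0" using pq tpos by simp
    thus "f (f z) \<noteq> z" using fix2[of z] z pq by auto
  qed (use pq that in simp_all)
  have left: "f (f z) > z" if "0 < z" "z < p" for z
  proof (rule ccontr)
    assume "\<not> f (f z) > z"
    moreover have "f (f z) \<noteq> z" using fix2[of z] that pq by auto
    ultimately have "f (f z) < z" by simp
    hence "f (f (f z)) > f z" using mirror[of z] that pq tlt by simp
    moreover have "f z > q" using f_dec1[of z p] that pq tlt p0 by simp
    ultimately show False using right by force
  qed
  have ap: "f m \<le> p" using f_dec1'[of q m] pq tpos p0 by simp
  have bm: "f (f m) \<le> m"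
  proof (cases "q = m")
    case True thus ?thesis using p0 by simp
  next
    case False thus ?thesis using right[of m] pq by simp
  qed
  have inv: "f ` {f m .. f (f m)} \<subseteq> {f m .. f (f m)}" using inv_of_bm[OF bm] .
  have h2: "\<forall>z. 0 < z \<and> z < f m \<longrightarrow> f (f z) > z"
  proof (intro allI impI)
    fix z assume z: "0 < z \<and> z < f m"
    thus "f (f z) > z" using left[of z] ap by simp
  qed
  define S where "S = {s. s > 0 \<and> (\<exists>n. (f ^^ n) s = tbar)}"
  show "tbar < - d * M / (c * M + 2 * d) \<Longrightarrow> {s. s > 0 \<and> (\<exists>n. (f ^^ n) s = tbar)} = {tbar}"
    by (rule S_singleton[OF fM_lt_tbar])
  show "t 0 \<in> {s. s > 0 \<and> (\<exists>n. (f ^^ n) s = tbar)} \<Longrightarrow> t \<longlonglongrightarrow> tbar"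
  proof -
    assume "t 0 \<in> {s. s > 0 \<and> (\<exists>n. (f ^^ n) s = tbar)}"
    then obtain n where "(f ^^ n) (t 0) = tbar" by blast
    hence n: "t n = tbar" using orbit_funpow[OF tS, of n] by simp
    have "t (k + n) = tbar" for k
    proof (induction k)
      case 0 thus ?case using n by simp
    next
      case (Suc k) thus ?case using tS tfix by simp
    qed
    hence "(\<lambda>k. t (k + n)) \<longlonglongrightarrow> tbar" by simp
    thus "t \<longlonglongrightarrow> tbar" by (rule LIMSEQ_offset)
  qed
  show "t 0 \<notin> {s. s > 0 \<and> (\<exists>n. (f ^^ n) s = tbar)} \<Longrightarrow> conv_two_cycle t p q"
  proof -
    assume nS: "t 0 \<notin> {s. s > 0 \<and> (\<exists>n. (f ^^ n) s = tbar)}"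
    have ntb: "t n \<noteq> tbar" for n
    proof
      assume "t n = tbar"
      hence "(f ^^ n) (t 0) = tbar" using orbit_funpow[OF tS, of n] by simp
      hence "t 0 \<in> {s. s > 0 \<and> (\<exists>n. (f ^^ n) s = tbar)}" using t0 by blast
      thus False using nS by simp
    qed
    obtain N0 where "\<forall>n\<ge>N0. t n \<ge> f m" using below_alpha_finite[OF t0 tS h2 bm] by blast
    then obtain N where N: "\<forall>n\<ge>N. t n \<in> {f m .. f (f m)}" using ev_in_I[OF t0 tS inv] by blast
    obtain L where L: "(\<lambda>k. t (2*(N+k))) \<longlonglongrightarrow> L" "L \<in> {f m .. f (f m)}" "f (f L) = L"
        "incseq (\<lambda>k. t (2*(N+k))) \<or> decseq (\<lambda>k. t (2*(N+k)))"
        "(\<lambda>n. t (2*n)) \<longlonglongrightarrow> L" "(\<lambda>n. t (2*n+1)) \<longlonglongrightarrow> f L"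
      using eventually_I_conv[OF tS bm inv N] by blast
    define e where "e k = t (2*(N+k))" for k
    have eI: "e k \<in> {f m .. f (f m)}" for k unfolding e_def using N by simp
    have eS: "e (Suc k) = f (f (e k))" for k unfolding e_def using tS by (simp add: numeral_2_eq_2)
    have ene: "e k \<noteq> tbar" for k unfolding e_def using ntb by simp
    have eL: "e \<longlonglongrightarrow> L" using L(1) unfolding e_def .
    have emono: "incseq e \<or> decseq e" using L(4) unfolding e_def .
    have Lp: "L > 0" using L alpha_pos by simp
    have pI: "p \<in> {f m .. f (f m)}" using ap pq beta_gt by simp
    have qI: "q \<in> {f m .. f (f m)}"
    proof -
      have "f p \<le> f (f m)" using f_dec1'[of "f m" p] alpha_pos ap pq tlt by simp
      thus ?thesis using p0 ap pq alpha_lt by simp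
    qed
    have "L \<noteq> tbar"
    proof
      assume Lt: "L = tbar"
      show False
      proof (cases "e 0 < tbar")
        case True
        show False
        proof (cases "incseq e")
          case False
          hence "decseq e" using emono by simp
          hence "L \<le> e 0" using LIMSEQ_le_const2[OF eL] by (metis decseqD le0)
          thus False using True Lt by simp
        next
          case inc: True
          have "e 0 \<le> e 1" using inc by (simp add: incseqD)
          hence le: "e 0 \<le> f (f (e 0))" using eS[of 0] by simp
          have "e 0 \<le> p"
          proof (rule ccontr)
            assume "\<not> e 0 \<le> p"
            hence "f (f (e 0)) < e 0" using sg(2) True by simp
            thus False using le by simp
          qed
          have "e k \<le> p" for k
          proof (induction k)
            case 0 thus ?case using \<open>e 0 \<le> p\<close> .
          next
            case (Suc k) thus ?case using hmono[OF bm inv eI[of k] pI Suc.IH] eS p0 by simp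
          qed
          hence "L \<le> p" using LIMSEQ_le_const2[OF eL] by blast
          thus False using Lt pq by simp
        qed
      next
        case False
        hence gt: "e 0 > tbar" using ene[of 0] by simp
        show False
        proof (cases "decseq e")
          case False
          hence "incseq e" using emono by simp
          hence "e 0 \<le> L" using LIMSEQ_le_const[OF eL] by (metis incseqD le0)
          thus False using gt Lt by simp
        next
          case dec: True
          have "e 1 \<le> e 0" using dec by (simp add: decseqD)
          hence le: "f (f (e 0)) \<le> e 0" using eS[of 0] by simp
          have "q \<le> e 0"
          proof (rule ccontr)
            assume "\<not> q \<le> e 0"
            hence "f (f (e 0)) > e 0" using sg(1) gt by simp
            thus False using le by simp
          qed
          have "q \<le> e k" for k
          proof (induction k)
            case 0 thus ?case using \<open>q \<le> e 0\<close> .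
          next
            case (Suc k) thus ?case using hmono[OF bm inv qI eI[of k] Suc.IH] eS p0 by simp
          qed
          hence "q \<le> L" using LIMSEQ_le_const[OF eL] by blast
          thus False using Lt pq by simp
        qed
      qed
    qed
    hence "L = p \<or> L = q" using fix2[OF Lp L(3)] by simp
    thus "conv_two_cycle t p q" unfolding conv_two_cycle_def using L(5,6) p0 by auto
  qed
qed

end


theorem theorem6:
  fixes a b c d tbar :: real and t :: "nat \<Rightarrow> real"
  defines "f \<equiv> phi a b c d"
  defines "m \<equiv> xm b c d"
  defines "M \<equiv> xM b c d"
  defines "c1 \<equiv> - 2 * sqrt (b * d)"
  defines "I \<equiv> {f m .. f (f m)}"
  assumes abd: "a > 0" "b > 0" "d > 0"
    and crange: "cminus a b d < c" "c < - sqrt (3 * b * d)"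
    and eq: "tbar > 0" "f tbar = tbar" "\<forall>s>0. f s = s \<longrightarrow> s = tbar" "tbar < m"
    and sol: "t 0 > 0" "\<forall>n. t (Suc n) = f (t n)"
  shows
    "((c \<le> c1 \<or> (c > c1 \<and> f (f m) \<le> - d * m / (c * m + 2 * d))) \<longrightarrow> f ` I \<subseteq> I)
     \<and> (c \<le> c1 \<longrightarrow> (\<exists>N. \<forall>n\<ge>N. t n \<in> I))
     \<and> ((\<nexists>p q. two_cycle f p q) \<longrightarrow> t \<longlonglongrightarrow> tbar)
     \<and> (\<forall>p q. two_cycle f p q \<and> p < tbar \<and> tbar < q \<and> q \<le> m
          \<and> (\<forall>p' q'. two_cycle f p' q' \<longrightarrow> {p', q'} = {p, q}) \<longrightarrow>
          (let S = {s. s > 0 \<and> (\<exists>n. (f ^^ n) s = tbar)} in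
             (tbar < - d * M / (c * M + 2 * d) \<longrightarrow> S = {tbar})
           \<and> (t 0 \<notin> S \<longrightarrow> conv_two_cycle t p q)
           \<and> (t 0 \<in> S \<longrightarrow> t \<longlonglongrightarrow> tbar)))"
proof -
  have eq': "phi a b c d tbar = tbar" "\<forall>s>0. phi a b c d s = s \<longrightarrow> s = tbar" "tbar < xm b c d"
    using eq(2,3,4) unfolding f_def m_def by simp_all
  interpret S: setting a b c d tbar
    by (rule setting.intro[OF abd crange eq(1) eq'])
  have tS: "\<forall>n. t (Suc n) = phi a b c d (t n)" using sol(2) unfolding f_def .
  have A: "((c \<le> - 2 * sqrt (b * d) \<or> (c > - 2 * sqrt (b * d) \<and> phi a b c d (phi a b c d (xm b c d)) \<le> - d * xm b c d / (c * xm b c d + 2 * d)))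
           \<longrightarrow> phi a b c d ` {phi a b c d (xm b c d) .. phi a b c d (phi a b c d (xm b c d))} \<subseteq> {phi a b c d (xm b c d) .. phi a b c d (phi a b c d (xm b c d))})
       \<and> (c \<le> - 2 * sqrt (b * d) \<longrightarrow> (\<exists>N. \<forall>n\<ge>N. t n \<in> {phi a b c d (xm b c d) .. phi a b c d (phi a b c d (xm b c d))}))"
    by (rule S.partA[OF sol(1) tS])
  have B: "(\<nexists>p q. two_cycle (phi a b c d) p q) \<longrightarrow> t \<longlonglongrightarrow> tbar"
    by (intro impI) (rule S.partB[OF sol(1) tS])
  have C: "\<forall>p q. two_cycle (phi a b c d) p q \<and> p < tbar \<and> tbar < q \<and> q \<le> xm b c d
          \<and> (\<forall>p' q'. two_cycle (phi a b c d) p' q' \<longrightarrow> {p', q'} = {p, q}) \<longrightarrow>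
          (let S = {s. s > 0 \<and> (\<exists>n. (phi a b c d ^^ n) s = tbar)} in
             (tbar < - d * xM b c d / (c * xM b c d + 2 * d) \<longrightarrow> S = {tbar})
           \<and> (t 0 \<notin> S \<longrightarrow> conv_two_cycle t p q)
           \<and> (t 0 \<in> S \<longrightarrow> t \<longlonglongrightarrow> tbar))"
  proof (intro allI impI)
    fix p q
    assume h: "two_cycle (phi a b c d) p q \<and> p < tbar \<and> tbar < q \<and> q \<le> xm b c d
          \<and> (\<forall>p' q'. two_cycle (phi a b c d) p' q' \<longrightarrow> {p', q'} = {p, q})"
    show "let S = {s. s > 0 \<and> (\<exists>n. (phi a b c d ^^ n) s = tbar)} in
             (tbar < - d * xM b c d / (c * xM b c d + 2 * d) \<longrightarrow> S = {tbar})
           \<and> (t 0 \<notin> S \<longrightarrow> conv_two_cycle t p q)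
           \<and> (t 0 \<in> S \<longrightarrow> t \<longlonglongrightarrow> tbar)"
      unfolding Let_def
      by (rule S.partC[OF sol(1) tS, of p q, OF h[THEN conjunct1] h[THEN conjunct2, THEN conjunct1]
          h[THEN conjunct2, THEN conjunct2, THEN conjunct1] h[THEN conjunct2, THEN conjunct2, THEN conjunct2, THEN conjunct1]
          h[THEN conjunct2, THEN conjunct2, THEN conjunct2, THEN conjunct2]])
  qed
  show ?thesis unfolding f_def m_def M_def c1_def I_def
    by (rule conjI[OF conjunct1[OF A] conjI[OF conjunct2[OF A] conjI[OF B C]]])
qed


end
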